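(* Let $\Gamma\le E(n)$ be discrete, and let $(G,V)$ be a finite index cocompact translation pair of $\Gamma$ such that $G$ is abelian and $V$ is a linear subspace. Let $k=\dim\Gamma$ and suppose $k<n-2$. Then there exist half-lines $L_1,L_2\subset V^\perp$ starting from $0$ such that the following holds: if $\sigma'$ is a path from $L_1$ to $GL_2=\bigcup_{\gamma\in G}\gamma(L_2)$ and $s=\inf_t d(V,\sigma'(t))>0$, then $\operatorname{len}(\sigma')\ge\sqrt2\,s$.
   Context: $E(n)$ is the isometry group of $\mathbb{R}^n$ (maps $x\mapsto Bx+b$, $B\in O(n)$) with the topology of $O(n)\times\mathbb{R}^n$. For a discrete $\Gamma\le E(n)$, a subgroup $G\le\Gamma$ and an affine subspace $V$, $(G,V)$ is a cocompact translation pair of $\Gamma$ if $gV=V$ and $g|_V$ is a translation of $V$ for all $g\in G$, and $V/G$ is compact; it is a finite index cocompact translation pair if moreover $[\Gamma:G]<\infty$. $\dim\Gamma:=\dim V$ for any such pair (independent of choice). $V^\perp$ is the linear orthogonal complement of $V$, and $\operatorname{len}$ denotes Euclidean length of a path. *)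

theory Defs
  imports "HOL-Analysis.Analysis"
begin

text \<open>Elements of E(n): pairs (B,b) with B orthogonal, acting by x \<mapsto> B x + b.
  The topology is that of O(n) \<times> R^n, i.e. the product metric on pairs.\<close>

type_synonym 'n isom = "(real^'n^'n) \<times> (real^'n)"

definition isom_apply :: "'n::finite isom \<Rightarrow> real^'n \<Rightarrow> real^'n" where
  "isom_apply g x = fst g *v x + snd g"

definition isom_mult :: "'n::finite isom \<Rightarrow> 'n isom \<Rightarrow> 'n isom" where
  "isom_mult g h = (fst g ** fst h, fst g *v snd h + snd g)"

definition isom_one :: "'n::finite isom" where
  "isom_one = (mat 1, 0)"

definition isom_inv :: "'n::finite isom \<Rightarrow> 'n isom" where
  "isom_inv g = (transpose (fst g), - (transpose (fst g) *v snd g))"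

definition Euclid_group :: "'n::finite isom set" where
  "Euclid_group = {g. orthogonal_matrix (fst g)}"

definition isom_subgroup :: "'n::finite isom set \<Rightarrow> 'n isom set \<Rightarrow> bool" where
  "isom_subgroup H K \<longleftrightarrow> H \<subseteq> K \<and> isom_one \<in> H \<and>
     (\<forall>g\<in>H. \<forall>h\<in>H. isom_mult g h \<in> H) \<and> (\<forall>g\<in>H. isom_inv g \<in> H)"

definition discrete_isom_group :: "'n::finite isom set \<Rightarrow> bool" where
  "discrete_isom_group \<Gamma> \<longleftrightarrow> isom_subgroup \<Gamma> Euclid_group \<and>
     (\<forall>g\<in>\<Gamma>. \<exists>e>0. \<forall>h\<in>\<Gamma>. dist h g < e \<longrightarrow> h = g)"

definition cocompact_translation_pair ::
  "'n::finite isom set \<Rightarrow> 'n isom set \<Rightarrow> (real^'n) set \<Rightarrow> bool" where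
  "cocompact_translation_pair \<Gamma> G V \<longleftrightarrow>
     isom_subgroup G \<Gamma> \<and> affine V \<and> V \<noteq> {} \<and>
     (\<forall>g\<in>G. isom_apply g ` V = V \<and> (\<exists>v. \<forall>x\<in>V. isom_apply g x = x + v)) \<and>
     (\<exists>(T :: (real^'n) set topology) q.
        quotient_map (top_of_set V) T q \<and>
        (\<forall>x\<in>V. \<forall>y\<in>V. q x = q y \<longleftrightarrow> (\<exists>g\<in>G. isom_apply g x = y)) \<and>
        compact_space T)"

definition finite_index :: "'n::finite isom set \<Rightarrow> 'n isom set \<Rightarrow> bool" where
  "finite_index \<Gamma> G \<longleftrightarrow> finite {isom_mult g ` G | g. g \<in> \<Gamma>}"

definition half_line :: "real^'n \<Rightarrow> (real^'n) set" where
  "half_line u = {t *\<^sub>R u | t. t \<ge> 0}"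

definition path_len :: "(real \<Rightarrow> real^'n) \<Rightarrow> ereal" where
  "path_len \<sigma> = (SUP ts \<in> {ts. sorted ts \<and> set ts \<subseteq> {0..1}}.
      ereal (\<Sum>i<length ts - 1. dist (\<sigma> (ts ! i)) (\<sigma> (ts ! Suc i))))"

end

theory Submission
  imports Defs
begin

lemma lin_coeff_zero:
  fixes a b :: real
  assumes "\<forall>t. 2*t*a + t^2*b \<le> 0" "a \<ge> 0"
  shows "a = 0"
proof (rule ccontr)
  assume "a \<noteq> 0" then have ap: "a > 0" using assms(2) by simp
  define t where "t = a / (\<bar>b\<bar> + 1)"
  have tp: "t > 0" using ap by (simp add: t_def)
  have "t * \<bar>b\<bar> < a" using ap by (simp add: t_def field_simps)
  hence 1: "t*(t*\<bar>b\<bar>) < t*a" using tp by simp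
  have 2: "t^2*b \<ge> - (t*(t*\<bar>b\<bar>))" 
  proof -
    have "- (t*\<bar>b\<bar>) \<le> t*b" using tp mult_left_mono[OF abs_ge_minus_self[of b], of t] by simp
    hence "t*(- (t*\<bar>b\<bar>)) \<le> t*(t*b)" using tp by (metis less_imp_le mult_left_mono)
    thus ?thesis by (simp add: power2_eq_square mult.assoc)
  qed
  have 3: "t*a > 0" using tp ap by simp
  have "2*t*a + t^2*b > 0" using 1 2 3 by (simp only: mult.assoc)
  thus False using assms(1) by (meson not_le)
qed
lemma aux: fixes X Y l t A B C D :: real
  assumes "X \<le> l*Y" "X = l + 2*t*A + t^2*C" "Y = 1 + 2*t*B + t^2*D" "D = A - l*B"
  shows "2*t*D + t^2*(C - l*D) \<le> 0"
proof -
  have "l*Y - X = - (2*t*D + t^2*(C - l*D))" unfolding assms(2,3,4) by (simp add: algebra_simps power2_eq_square)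
  thus ?thesis using assms(1) by linarith
qed

lemma sym_eig:
  fixes f :: "'a::euclidean_space \<Rightarrow> 'a"
  assumes lf: "linear f" and sU: "subspace U" and ne: "U \<noteq> {0}"
    and sym: "\<forall>x y. x \<bullet> f y = f x \<bullet> y" and pres: "\<forall>x\<in>U. f x \<in> U"
  obtains v \<mu> where "v\<in>U" "v\<noteq>0" "f v = \<mu> *\<^sub>R v"
proof -
  define S where "S = U \<inter> sphere 0 1"
  have cS: "compact S" unfolding S_def
    by (simp add: closed_Int_compact closed_subspace sU)
  obtain x where x: "x \<in> U" "x \<noteq> 0" using ne sU subspace_0 by blast
  have "x /\<^sub>R norm x \<in> S" using x sU by (simp add: S_def subspace_scale)
  hence Sne: "S \<noteq> {}" by blast
  have cf: "continuous_on S (\<lambda>x. x \<bullet> f x)"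
    by (intro continuous_intros linear_continuous_on linear_conv_bounded_linear[THEN iffD1] lf)
  obtain v where vS: "v \<in> S" and vmax: "\<forall>y\<in>S. y \<bullet> f y \<le> v \<bullet> f v"
    using continuous_attains_sup[OF cS Sne cf] by blast
  define l where "l = v \<bullet> f v"
  have vU: "v \<in> U" and nv: "norm v = 1" using vS by (auto simp: S_def)
  have vv: "v \<bullet> v = 1" using nv by (simp add: norm_eq_1)
  have bound: "y \<bullet> f y \<le> l * (y \<bullet> y)" if "y \<in> U" for y
  proof (cases "y = 0")
    case True then show ?thesis by (simp add: linear_0[OF lf])
  next
    case False
    define z where "z = y /\<^sub>R norm y"
    have "z \<in> S" using that False sU by (simp add: S_def z_def subspace_scale)
    hence "z \<bullet> f z \<le> l" using vmax l_def by auto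
    moreover have "z \<bullet> f z = (y \<bullet> f y) / (norm y)^2"
      by (simp add: z_def linear_scale[OF lf] power2_eq_square divide_inverse inverse_mult_distrib ac_simps)
    moreover have "y \<bullet> y = (norm y)^2" by (simp add: power2_norm_eq_inner)
    moreover have "norm y > 0" using False by simp
    ultimately show ?thesis by (simp add: field_simps)
  qed
  define w where "w = f v - l *\<^sub>R v"
  have wU: "w \<in> U" unfolding w_def using pres vU sU by (simp add: subspace_diff subspace_scale)
  have "\<forall>t. 2*t*(w \<bullet> w) + t^2*(w \<bullet> f w - l*(w \<bullet> w)) \<le> 0"
  proof
    fix t :: real
    have "v + t *\<^sub>R w \<in> U" using vU wU sU by (simp add: subspace_add subspace_scale)
    from bound[OF this] have
      "(v + t *\<^sub>R w) \<bullet> f (v + t *\<^sub>R w) \<le> l * ((v + t *\<^sub>R w) \<bullet> (v + t *\<^sub>R w))" .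
    moreover have "(v + t *\<^sub>R w) \<bullet> f (v + t *\<^sub>R w) = l + 2*t*(w \<bullet> f v) + t^2*(w \<bullet> f w)"
    proof -
      have e1: "f (v + t *\<^sub>R w) = f v + t *\<^sub>R f w" by (simp add: linear_add[OF lf] linear_scale[OF lf])
      have e2: "v \<bullet> f w = w \<bullet> f v" using sym by (metis inner_commute)
      have "(v + t *\<^sub>R w) \<bullet> (f v + t *\<^sub>R f w) = v \<bullet> f v + t*(v \<bullet> f w) + t*(w \<bullet> f v) + t*t*(w \<bullet> f w)"
        by (simp add: inner_add_left inner_add_right algebra_simps)
      thus ?thesis using e1 e2 by (simp add: l_def power2_eq_square)
    qed
    moreover have "(v + t *\<^sub>R w) \<bullet> (v + t *\<^sub>R w) = 1 + 2*t*(w \<bullet> v) + t^2*(w \<bullet> w)"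
    proof -
      have "(v + t *\<^sub>R w) \<bullet> (v + t *\<^sub>R w) = v \<bullet> v + t*(v \<bullet> w) + t*(w \<bullet> v) + t*t*(w \<bullet> w)"
        by (simp add: inner_add_left inner_add_right algebra_simps)
      thus ?thesis using vv by (simp add: power2_eq_square inner_commute[of v w])
    qed
    moreover have "w \<bullet> w = w \<bullet> f v - l * (w \<bullet> v)"
      by (simp add: w_def inner_diff_right)
    ultimately show "2*t*(w \<bullet> w) + t^2*(w \<bullet> f w - l*(w \<bullet> w)) \<le> 0"
      by (rule aux)
  qed
  hence "w \<bullet> w = 0" by (intro lin_coeff_zero) auto
  hence "f v = l *\<^sub>R v" by (simp add: w_def)
  moreover have "v \<noteq> 0" using nv by auto
  ultimately show ?thesis using that vU by blast
qed


declare transpose_matrix_vector[simp del]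

lemma tr_inner: "x \<bullet> ((A::real^'n^'n) *v y) = (transpose A *v x) \<bullet> y"
  by (simp only: transpose_matrix_vector dot_lmul_matrix)

lemma inv_sub:
  fixes R :: "(real^'n^'n) set" and U :: "(real^'n) set"
  assumes sU: "subspace U" and dU: "3 \<le> dim U"
    and RT: "\<forall>B\<in>R. transpose B \<in> R"
    and RC: "\<forall>B\<in>R. \<forall>C\<in>R. \<forall>y. B *v (C *v y) = C *v (B *v y)"
    and RU: "\<forall>B\<in>R. \<forall>u\<in>U. B *v u \<in> U"
  shows "\<exists>u1 u2. u1\<in>U \<and> u2\<in>U \<and> u1\<noteq>0 \<and> u2\<noteq>0 \<and> (\<forall>B\<in>R. u1 \<bullet> (B *v u2) = 0)"
proof -
  have ne: "U \<noteq> {0}" using dU by auto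
  obtain x where x: "x \<in> U" "x \<noteq> 0" using ne sU subspace_0 by blast
  have key: "\<exists>u2 W. u2\<in>U \<and> u2\<noteq>0 \<and> subspace W \<and> W \<subseteq> U \<and> W \<noteq> U \<and> (\<forall>B\<in>R. B *v u2 \<in> W)"
  proof (cases "\<exists>f. linear f \<and> (\<forall>x y. x \<bullet> f y = f x \<bullet> y) \<and> (\<forall>C\<in>R. \<forall>y. f (C *v y) = C *v f y)
      \<and> (\<forall>u\<in>U. f u \<in> U) \<and> \<not>(\<exists>l. \<forall>u\<in>U. f u = l *\<^sub>R u)")
    case True
    then obtain f where lf: "linear f" and sym: "\<forall>x y. x \<bullet> f y = f x \<bullet> y"
      and com: "\<forall>C\<in>R. \<forall>y. f (C *v y) = C *v f y" and pres: "\<forall>u\<in>U. f u \<in> U"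
      and nsc: "\<not>(\<exists>l. \<forall>u\<in>U. f u = l *\<^sub>R u)" by blast
    obtain v \<mu> where v: "v\<in>U" "v\<noteq>0" "f v = \<mu> *\<^sub>R v" using sym_eig[OF lf sU ne sym pres] by blast
    define W where "W = {x\<in>U. f x = \<mu> *\<^sub>R x}"
    show ?thesis
    proof (intro exI conjI)
      show "v\<in>U" "v\<noteq>0" by (fact v)+
      show "subspace W" unfolding W_def subspace_def using sU
        by (auto simp: subspace_0 subspace_add subspace_scale linear_0[OF lf] linear_add[OF lf]
            linear_scale[OF lf] algebra_simps)
      show "W \<subseteq> U" by (auto simp: W_def)
      show "W \<noteq> U" using nsc by (auto simp: W_def)
      show "\<forall>B\<in>R. B *v v \<in> W" using com v RU
        by (auto simp: W_def matrix_vector_mult_scaleR)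
    qed
  next
    case False
    hence scal: "\<And>f. linear f \<Longrightarrow> (\<forall>x y. x \<bullet> f y = f x \<bullet> y) \<Longrightarrow> (\<forall>C\<in>R. \<forall>y. f (C *v y) = C *v f y)
       \<Longrightarrow> (\<forall>u\<in>U. f u \<in> U) \<Longrightarrow> \<exists>l. \<forall>u\<in>U. f u = l *\<^sub>R u" by blast
    define a where "a C y = C *v y - transpose C *v y" for C :: "real^'n^'n" and y
    have alin: "linear (a C)" for C by (simp add: a_def linear_iff algebra_simps)
    have aanti: "x \<bullet> a C y = - (a C x \<bullet> y)" for C x y
    proof -
      have h1: "x \<bullet> (C *v y) = (transpose C *v x) \<bullet> y" by (rule tr_inner)
      have h2: "x \<bullet> (transpose C *v y) = (C *v x) \<bullet> y" using tr_inner[of x "transpose C" y] by (simp only: transpose_transpose)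
      show ?thesis unfolding a_def inner_diff_right inner_diff_left h1 h2 by simp
    qed
    have acomR: "a C (D *v y) = D *v (a C y)" if "C\<in>R" "D\<in>R" for C D y
    proof -
      have "C *v (D *v y) = D *v (C *v y)" using RC that by blast
      moreover have "transpose C *v (D *v y) = D *v (transpose C *v y)" using RC RT that by blast
      ultimately show ?thesis by (simp add: a_def matrix_vector_mult_diff_distrib)
    qed
    have acom: "a C (a D y) = a D (a C y)" if "C\<in>R" "D\<in>R" for C D y
    proof -
      have "a C (a D y) = a C (D *v y) - a C (transpose D *v y)"
        by (simp add: a_def matrix_vector_mult_diff_distrib algebra_simps)
      also have "\<dots> = D *v a C y - transpose D *v a C y"
        using acomR[OF that] acomR[OF that(1) RT[rule_format, OF that(2)]] by (simp only:)
      finally show ?thesis by (simp add: a_def)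
    qed
    have aU: "a C u \<in> U" if "C\<in>R" "u\<in>U" for C u
      using that RU RT sU by (simp add: a_def subspace_diff)
    have lam: "\<exists>l. \<forall>u\<in>U. C *v u + transpose C *v u = l *\<^sub>R u" if C: "C\<in>R" for C
    proof (rule scal)
      show "linear (\<lambda>u. C *v u + transpose C *v u)" by (simp add: linear_iff algebra_simps)
      show "\<forall>x y. x \<bullet> (C *v y + transpose C *v y) = (C *v x + transpose C *v x) \<bullet> y"
        by (simp add: inner_add_left inner_add_right tr_inner)
      show "\<forall>D\<in>R. \<forall>y. C *v (D *v y) + transpose C *v (D *v y) = D *v (C *v y + transpose C *v y)"
        using RC RT C by (simp add: matrix_vector_right_distrib)
      show "\<forall>u\<in>U. C *v u + transpose C *v u \<in> U" using RU RT C sU by (simp add: subspace_add)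
    qed
    have mu: "\<exists>l. \<forall>u\<in>U. a C (a D u) = l *\<^sub>R u" if C: "C\<in>R" and D: "D\<in>R" for C D
    proof (rule scal)
      show "linear (\<lambda>u. a C (a D u))" using linear_compose[OF alin alin] by (simp add: o_def)
      show "\<forall>x y. x \<bullet> a C (a D y) = a C (a D x) \<bullet> y"
      proof (intro allI)
        fix x y
        have "x \<bullet> a C (a D y) = - (a C x \<bullet> a D y)" by (rule aanti)
        also have "\<dots> = a D (a C x) \<bullet> y" using aanti[of "a C x" D y] by simp
        finally show "x \<bullet> a C (a D y) = a C (a D x) \<bullet> y" using acom[OF C D] by simp
      qed
      show "\<forall>E\<in>R. \<forall>y. a C (a D (E *v y)) = E *v a C (a D y)" using acomR C D by simp
      show "\<forall>u\<in>U. a C (a D u) \<in> U" using aU C D by simp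
    qed
    have decomp: "B *v x = (1/2) *\<^sub>R (B *v x + transpose B *v x) + (1/2) *\<^sub>R a B x" for B
    proof -
      have "(B *v x + transpose B *v x) + (B *v x - transpose B *v x) = 2 *\<^sub>R (B *v x)"
        by (simp add: scaleR_2)
      hence "(1/2) *\<^sub>R ((B *v x + transpose B *v x) + a B x) = B *v x" by (simp add: a_def)
      thus ?thesis by (simp only: scaleR_add_right)
    qed
    show ?thesis
    proof (cases "\<forall>C\<in>R. a C x = 0")
      case True
      show ?thesis
      proof (intro exI conjI)
        show "x \<in> U" "x \<noteq> 0" by (fact x)+
        show "subspace (span {x})" by simp
        show "span {x} \<subseteq> U" using x sU by (simp add: span_minimal)
        have "dim (span {x}) \<le> 1" using dim_le_card[of "span {x}" "{x}"] by simp
        thus "span {x} \<noteq> U" using dU by auto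
        show "\<forall>B\<in>R. B *v x \<in> span {x}"
        proof
          fix B assume B: "B \<in> R"
          obtain l where "\<forall>u\<in>U. B *v u + transpose B *v u = l *\<^sub>R u" using lam[OF B] by blast
          hence "B *v x = (1/2) *\<^sub>R (l *\<^sub>R x)" using decomp[of B] True B x by simp
          thus "B *v x \<in> span {x}" by (simp add: span_base span_scale)
        qed
      qed
    next
      case False
      then obtain C0 where C0: "C0 \<in> R" "a C0 x \<noteq> 0" by blast
      define y where "y = a C0 x"
      obtain \<nu> where nu: "\<forall>u\<in>U. a C0 (a C0 u) = \<nu> *\<^sub>R u" using mu[OF C0(1) C0(1)] by blast
      have "\<nu> * (x \<bullet> x) = x \<bullet> a C0 (a C0 x)" using nu x by simp
      also have "\<dots> = - (y \<bullet> y)" using aanti[of x C0 "a C0 x"] by (simp add: y_def)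
      finally have "\<nu> \<noteq> 0" using C0(2) by (auto simp: y_def)
      have yU: "y \<in> U" using aU C0 x by (simp add: y_def)
      show ?thesis
      proof (intro exI conjI)
        show "x \<in> U" "x \<noteq> 0" by (fact x)+
        show "subspace (span {x, y})" by simp
        show "span {x, y} \<subseteq> U" using x yU sU by (simp add: span_minimal)
        have "dim (span {x, y}) \<le> card {x, y}" using dim_le_card[of "span {x, y}" "{x, y}"] by simp
        also have "\<dots> \<le> 2" by (simp add: card_insert_le_m1)
        finally show "span {x, y} \<noteq> U" using dU by auto
        show "\<forall>B\<in>R. B *v x \<in> span {x, y}"
        proof
          fix B assume B: "B \<in> R"
          obtain l where l: "\<forall>u\<in>U. B *v u + transpose B *v u = l *\<^sub>R u" using lam[OF B] by blast
          obtain m where m: "\<forall>u\<in>U. a C0 (a B u) = m *\<^sub>R u" using mu[OF C0(1) B] by blast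
          define z where "z = a B x - (m/\<nu>) *\<^sub>R y"
          have zU: "z \<in> U" using aU B x yU sU by (simp add: z_def subspace_diff subspace_scale)
          have "a C0 z = m *\<^sub>R x - (m/\<nu>) *\<^sub>R (\<nu> *\<^sub>R x)"
            using m nu x by (simp add: z_def y_def linear_diff[OF alin] linear_scale[OF alin])
          hence az: "a C0 z = 0" using \<open>\<nu> \<noteq> 0\<close> by simp
          have "\<nu> *\<^sub>R z = 0" using nu zU az by (metis linear_0[OF alin])
          hence "z = 0" using \<open>\<nu> \<noteq> 0\<close> by simp
          hence "a B x = (m/\<nu>) *\<^sub>R y" by (simp add: z_def)
          hence "B *v x = (1/2) *\<^sub>R (l *\<^sub>R x) + (1/2) *\<^sub>R ((m/\<nu>) *\<^sub>R y)"
            using decomp[of B] l x by simp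
          thus "B *v x \<in> span {x, y}"
            by (simp add: span_add span_base span_scale)
        qed
      qed
    qed
  qed
  then obtain u2 W where u2: "u2\<in>U" "u2\<noteq>0" and sW: "subspace W" and WU: "W \<subseteq> U" "W \<noteq> U"
    and BW: "\<forall>B\<in>R. B *v u2 \<in> W" by blast
  have "span W \<subset> span U"
  proof -
    have "span W = W" "span U = U" using sW sU by simp_all
    thus ?thesis using WU by (simp only: psubset_eq) blast
  qed
  then obtain u1 where u1: "u1 \<noteq> 0" "u1 \<in> span U" "\<And>y. y \<in> span W \<Longrightarrow> orthogonal u1 y"
    using orthogonal_to_subspace_exists_gen by metis
  show ?thesis
  proof (intro exI conjI)
    show "u1 \<in> U" using u1(2) sU span_eq_iff by metis
    show "u2 \<in> U" "u1 \<noteq> 0" "u2 \<noteq> 0" using u1 u2 by auto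
    show "\<forall>B\<in>R. u1 \<bullet> (B *v u2) = 0" using BW u1(3) sW span_eq_iff unfolding orthogonal_def by metis
  qed
qed


theorem mainTheorem20:
  fixes \<Gamma> G :: "'n::finite isom set" and V :: "(real^'n) set"
  assumes "discrete_isom_group \<Gamma>"
    and "cocompact_translation_pair \<Gamma> G V"
    and "finite_index \<Gamma> G"
    and "\<forall>g\<in>G. \<forall>h\<in>G. isom_mult g h = isom_mult h g"
    and "subspace V"
    and "dim V + 2 < CARD('n)"
  shows "\<exists>u1 u2. u1 \<noteq> 0 \<and> u2 \<noteq> 0 \<and> half_line u1 \<subseteq> orthogonal_comp V \<and>
           half_line u2 \<subseteq> orthogonal_comp V \<and>
           (\<forall>\<sigma> :: real \<Rightarrow> real^'n. path \<sigma> \<longrightarrow> pathstart \<sigma> \<in> half_line u1 \<longrightarrow>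
              pathfinish \<sigma> \<in> (\<Union>g\<in>G. isom_apply g ` half_line u2) \<longrightarrow>
              Inf ((\<lambda>t. infdist (\<sigma> t) V) ` {0..1}) > 0 \<longrightarrow>
              path_len \<sigma> \<ge> ereal (sqrt 2 * Inf ((\<lambda>t. infdist (\<sigma> t) V) ` {0..1})))"
proof -
  have sg: "isom_subgroup G \<Gamma>" and TP: "\<forall>g\<in>G. isom_apply g ` V = V \<and> (\<exists>v. \<forall>x\<in>V. isom_apply g x = x + v)"
    using assms(2) unfolding cocompact_translation_pair_def by auto
  have GE: "orthogonal_matrix (fst g)" if "g \<in> G" for g
    using assms(1) sg that unfolding discrete_isom_group_def isom_subgroup_def Euclid_group_def by auto
  have sV: "subspace V" by (fact assms(5))
  have V0: "0 \<in> V" using sV subspace_0 by blast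
  define U where "U = orthogonal_comp V"
  define R where "R = fst ` G"
  have sU: "subspace U" unfolding U_def by (rule subspace_orthogonal_comp)
  have fixV: "fst g *v x = x" and bV: "snd g \<in> V" if g: "g \<in> G" and x: "x \<in> V" for g x
  proof -
    obtain v where v: "\<forall>x\<in>V. isom_apply g x = x + v" using TP g by blast
    have "isom_apply g 0 = snd g" by (simp add: isom_apply_def)
    hence sv: "snd g = v" using v V0 by force
    show "fst g *v x = x" using v x sv by (simp add: isom_apply_def)
    have "isom_apply g 0 \<in> V" using TP g V0 by blast
    thus "snd g \<in> V" by (simp add: isom_apply_def)
  qed
  have orthB: "(fst g *v u) \<bullet> (fst g *v y) = u \<bullet> y" if "g \<in> G" for g u y
  proof -
    have "(fst g *v u) \<bullet> (fst g *v y) = (transpose (fst g) *v (fst g *v u)) \<bullet> y" by (rule tr_inner)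
    also have "\<dots> = u \<bullet> y" using GE[OF that]
      by (simp add: matrix_vector_mul_assoc orthogonal_matrix_def)
    finally show ?thesis .
  qed
  have RU: "\<forall>B\<in>R. \<forall>u\<in>U. B *v u \<in> U"
  proof (intro ballI)
    fix B u assume "B \<in> R" "u \<in> U"
    then obtain g where g: "g \<in> G" "B = fst g" and u: "\<forall>y\<in>V. orthogonal y u"
      by (auto simp: R_def U_def orthogonal_comp_def)
    show "B *v u \<in> U" unfolding U_def orthogonal_comp_def
    proof (clarify)
      fix y assume y: "y \<in> V"
      have "y \<bullet> (B *v u) = (B *v y) \<bullet> (B *v u)" using fixV[OF g(1) y] g by simp
      also have "\<dots> = y \<bullet> u" using orthB[OF g(1)] g by simp
      finally show "orthogonal y (B *v u)" using u y by (simp add: orthogonal_def)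
    qed
  qed
  have RT: "\<forall>B\<in>R. transpose B \<in> R"
  proof
    fix B assume "B \<in> R"
    then obtain g where g: "g \<in> G" "B = fst g" by (auto simp: R_def)
    have "isom_inv g \<in> G" using sg g unfolding isom_subgroup_def by blast
    thus "transpose B \<in> R" using g by (force simp: R_def isom_inv_def)
  qed
  have RC: "\<forall>B\<in>R. \<forall>C\<in>R. \<forall>y. B *v (C *v y) = C *v (B *v y)"
  proof (intro ballI allI)
    fix B C y assume "B \<in> R" "C \<in> R"
    then obtain g h where "g \<in> G" "h \<in> G" "B = fst g" "C = fst h" by (auto simp: R_def)
    hence "B ** C = C ** B" using assms(4) by (metis fst_conv isom_mult_def)
    thus "B *v (C *v y) = C *v (B *v y)" by (simp add: matrix_vector_mul_assoc)
  qed
  have "dim {y \<in> UNIV. \<forall>x \<in> V. orthogonal x y} + dim V = dim (UNIV :: (real^'n) set)"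
    by (rule dim_subspace_orthogonal_to_vectors) (auto simp: sV)
  moreover have "{y \<in> UNIV. \<forall>x \<in> V. orthogonal x y} = U" by (auto simp: U_def orthogonal_comp_def)
  ultimately have "dim U + dim V = CARD('n)" by simp
  hence dU: "3 \<le> dim U" using assms(6) by linarith
  obtain u1 u2 where u: "u1\<in>U" "u2\<in>U" "u1\<noteq>0" "u2\<noteq>0" and perp: "\<forall>B\<in>R. u1 \<bullet> (B *v u2) = 0"
    using inv_sub[OF sU dU RT RC RU] by blast
  have hl: "half_line u \<subseteq> U" if "u \<in> U" for u
    using that sU by (auto simp: half_line_def subspace_scale)
  show ?thesis
  proof (intro exI conjI allI impI)
    show "u1 \<noteq> 0" "u2 \<noteq> 0" by (fact u)+
    show "half_line u1 \<subseteq> orthogonal_comp V" "half_line u2 \<subseteq> orthogonal_comp V"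
      using hl u unfolding U_def by auto
    fix \<sigma> :: "real \<Rightarrow> real^'n"
    assume pa: "path \<sigma>" and st: "pathstart \<sigma> \<in> half_line u1"
      and fi: "pathfinish \<sigma> \<in> (\<Union>g\<in>G. isom_apply g ` half_line u2)"
      and pos: "Inf ((\<lambda>t. infdist (\<sigma> t) V) ` {0..1}) > 0"
    define s where "s = Inf ((\<lambda>t. infdist (\<sigma> t) V) ` {0..1})"
    have bdd: "bdd_below ((\<lambda>t. infdist (\<sigma> t) V) ` {0..1})"
      by (rule bdd_belowI[of _ 0]) (auto simp: infdist_nonneg)
    have s0: "s \<le> infdist (\<sigma> 0) V" unfolding s_def by (rule cINF_lower[OF bdd]) simp
    have s1: "s \<le> infdist (\<sigma> 1) V" unfolding s_def by (rule cINF_lower[OF bdd]) simp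
    have sp: "s > 0" using pos s_def by simp
    obtain a where a: "\<sigma> 0 = a *\<^sub>R u1" "a \<ge> 0" using st by (auto simp: pathstart_def half_line_def)
    obtain g c where g: "g \<in> G" and c: "\<sigma> 1 = isom_apply g (c *\<^sub>R u2)" "c \<ge> 0"
      using fi by (auto simp: pathfinish_def half_line_def)
    define p where "p = \<sigma> 0"
    define w where "w = fst g *v (c *\<^sub>R u2)"
    define b where "b = snd g"
    have q: "\<sigma> 1 = w + b" using c by (simp add: isom_apply_def w_def b_def)
    have bV': "b \<in> V" using bV[OF g V0] by (simp add: b_def)
    have pU: "p \<in> U" using hl[OF u(1)] st by (auto simp: p_def pathstart_def)
    have wU: "w \<in> U" using RU g u(2) sU by (auto simp: w_def R_def subspace_scale)
    have "infdist p V \<le> dist p 0" using V0 by (rule infdist_le)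
    hence sp0: "s \<le> norm p" using s0 by (simp add: p_def)
    have "infdist (\<sigma> 1) V \<le> dist (\<sigma> 1) b" using bV' by (rule infdist_le)
    hence sw: "s \<le> norm w" using s1 q by (simp add: dist_norm)
    have pw: "p \<bullet> w = 0" using perp g
      by (auto simp: p_def w_def a matrix_vector_mult_scaleR R_def)
    have pb: "b \<bullet> p = 0" using pU bV' by (auto simp: U_def orthogonal_comp_def orthogonal_def)
    have wb: "b \<bullet> w = 0" using wU bV' by (auto simp: U_def orthogonal_comp_def orthogonal_def)
    have "(norm (p - (w + b)))^2 = (norm p)^2 + (norm w)^2 + (norm b)^2"
      by (simp add: power2_norm_eq_inner inner_diff_left inner_diff_right inner_add_left
          inner_add_right inner_commute pw pb wb)
    hence d2: "(dist (\<sigma> 0) (\<sigma> 1))^2 \<ge> (norm p)^2 + (norm w)^2"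
      using q by (simp add: dist_norm p_def)
    have "s^2 \<le> (norm p)^2" "s^2 \<le> (norm w)^2"
      using sp sp0 sw by (auto intro: power_mono)
    hence "(sqrt 2 * s)^2 \<le> (dist (\<sigma> 0) (\<sigma> 1))^2" using d2 by (simp add: power_mult_distrib)
    hence dle: "sqrt 2 * s \<le> dist (\<sigma> 0) (\<sigma> 1)" by (rule power2_le_imp_le) simp
    have "ereal (dist (\<sigma> 0) (\<sigma> 1)) \<le> path_len \<sigma>"
      unfolding path_len_def
    proof (rule order.trans[OF _ SUP_upper[of "[0::real,1]"]])
      show "[0::real,1] \<in> {ts. sorted ts \<and> set ts \<subseteq> {0..1}}" by simp
    qed simp
    thus "ereal (sqrt 2 * Inf ((\<lambda>t. infdist (\<sigma> t) V) ` {0..1})) \<le> path_len \<sigma>"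
      using dle unfolding s_def by (meson ereal_less_eq(3) order.trans)
  qed
qed

end
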